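(* Let $e_0,\dots,e_{14}$ be the coefficients of the numerator $\mathbf{E}_4(X)$ of the generating series $\sum_{\delta\ge0}\mathbf{T}(p^\delta)X^\delta$ for $\mathrm{Sp}_4$, given explicitly as polynomials in $p$, $T=\mathbf{T}(p)$, $T_1,T_2,T_3$, $\Delta=[\mathbf{p}]$ by: $e_0=1$, $e_1=0$, $e_2=-p^2\big((p^8+p^6+2p^4+2p^2+1)\Delta+(p^2+p+1)(p^2-p+1)T_3+T_2\big)$, $e_3=p^4(p+1)\big((p^2+1)(p^3-p^2+1)\Delta+T_3\big)T$, $e_4=p^7\big((p^2+p+1)(p^2-p+1)(p^8+3p^7+p^5+2p^3+p-1)\Delta^2+(p^2+p+1)(p^2-p+1)(2p^3+p-2)T_3\Delta-(p^2+p+1)(p^2-p+1)T_3^2+(2p^5+2p^3+p^2+p-1)T_2\Delta-T_2T_3+p(p^2+p+1)T_1\Delta-(p^2+p+1)T^2\Delta\big)$, $e_5=-p^{10}(p+1)\big((p^2+1)(p^7-p^6-p^2-1)\Delta-(p^2+1)T_3-T_2\big)T\Delta$, $e_6=p^{14}\big((p^{16}-p^{15}-2p^{14}-3p^{12}-5p^{10}-8p^8+p^7-8p^6-5p^4-4p^2-1)\Delta^3+(p^{12}-p^{10}-p^9-5p^8+2p^7-7p^6-6p^4-8p^2+p-2)T_3\Delta^2+(p^7-p^4-4p^2+2p-1)T_3^2\Delta+pT_3^3-(2p^8+3p^6+p^4-p^3+3p^2+p+1)T_2\Delta^2-(3p^2+p+1)T_2T_3\Delta-(p^6-p^3+1)T_1\Delta^2-T_1T_3\Delta+p^2(p^3+p-1)T^2\Delta^2\big)$,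 $e_7=-p^{19}(p-1)(p+1)\big((p^2+p+1)(p^2-p+1)(p^2+1)\Delta+(p^2+p+1)(p^2-p+1)T_3+T_2\big)T\Delta^2$, $e_8=-p^{24}\big((p^{16}-3p^{12}-3p^{10}-p^9-9p^8-8p^6-7p^4-5p^2+p-1)\Delta^3+(p^{10}-p^9-4p^8-6p^6-8p^4-9p^2+3p-2)T_3\Delta^2-(p^4+4p^2-3p+1)T_3^2\Delta+pT_3^3-(p^8+2p^6-p^5+2p^4+p^3+4p^2+1)T_2\Delta^2-(p^3+3p^2+1)T_2T_3\Delta+(p^5-p^2-1)T_1\Delta^2-T_1T_3\Delta-p(p^3-p^2-1)T^2\Delta^2\big)\Delta$, $e_9=p^{29}(p+1)\big((p^2+1)(p^5-2p^4-1)\Delta-(p^4+1)T_3-T_2\big)T\Delta^3$, $e_{10}=-p^{35}\big((p^2-p+1)(p^2+p+1)(p^8+2p^7+p^5+3p^3+p-1)\Delta^2-(p^2-p+1)(p^2+p+1)(p^5-3p^3-p+2)T_3\Delta-(p^2-p+1)(p^2+p+1)T_3^2+(p^5+3p^3+p^2+p-1)T_2\Delta-T_2T_3+p(p^2+p+1)T_1\Delta-(p^2+p+1)T^2\Delta\big)\Delta^3$, $e_{11}=-p^{41}(p+1)\big((p^2+1)(p^3-p^2+1)\Delta+T_3\big)T\Delta^4$, $e_{12}=p^{48}\big((2p^6+2p^4+2p^2+1)\Delta+(p^2-p+1)(p^2+p+1)T_3+T_2\big)\Delta^5$, $e_{13}=0$, $e_{14}=-p^{64}\Delta^7$. Let $\Omega(e_k)\in\mathbb{Q}(p)[x_0^{\pm1},x_1^{\pm1},\dots,x_4^{\pm1}]$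 be obtained by substituting into $e_k$ the images $\Omega(T),\Omega(T_1),\Omega(T_2),\Omega(T_3),\Omega(\Delta)$ listed in the context, regarding $p$ as an indeterminate. Then for every $k=0,\dots,14$: $$\Omega(e_{14-k})(p,x_0,x_1,x_2,x_3,x_4)=-p^{-6}\,(x_0^2x_1x_2x_3x_4)^{7-k}\;\Omega(e_k)\Big(\tfrac1p,\;x_0x_1x_2x_3x_4,\;\tfrac1{x_1},\tfrac1{x_2},\tfrac1{x_3},\tfrac1{x_4}\Big).$$
   Context: Here $\mathbf{T}(p)$, $T_i=\mathbf{T}_i(p^2)$ and $\Delta=[\mathbf{p}]$ are the standard generators of the Hecke ring of $\mathrm{Sp}_4(\mathbb{Z})$ inside the group of positive symplectic similitudes of genus 4, and $\mathbf{E}_4(X)=\sum e_kX^k$ is the numerator in $\sum_{\delta\ge0}\mathbf{T}(p^\delta)X^\delta=\mathbf{E}_4(X)/\mathbf{F}_4(X)$. The spherical (Satake) map $\Omega$ is the ring homomorphism into Laurent polynomials in $x_0,\dots,x_4$ whose values on generators are as follows. For integers $i_1\ge i_2\ge i_3\ge i_4\ge0$ let $\mathrm{sym}_{i_1i_2i_3i_4}$ denote the sum of the distinct monomials obtained from $x_1^{i_1}x_2^{i_2}x_3^{i_3}x_4^{i_4}$ by permuting $x_1,\dots,x_4$ (each with coefficient 1). Then $\Omega(\mathbf{T}(p))=x_0(\mathrm{sym}_{1111}+\mathrm{sym}_{1110}+\mathrm{sym}_{1100}+\mathrm{sym}_{1000}+1)$; $\Omega(T_1)=x_0^2p^{-8}\big((p-1)^2(p+1)(4p^4+3p^3+3p^2+p+1)\mathrm{sym}_{1111}+p^4(p-1)(3p^2+2p+1)(\mathrm{sym}_{2111}+\mathrm{sym}_{1110})+p^5(p-1)(p+1)(\mathrm{sym}_{2211}+\mathrm{sym}_{2110}+\mathrm{sym}_{1100})+p^7(\mathrm{sym}_{2221}+\mathrm{sym}_{2210}+\mathrm{sym}_{2100}+\mathrm{sym}_{1000})\big)$;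 $\Omega(T_2)=x_0^2p^{-8}\big((p-1)(4p^4+3p^3+3p^2+p+1)\mathrm{sym}_{1111}+p^2(p-1)(p^2+p+1)(\mathrm{sym}_{2111}+\mathrm{sym}_{1110})+p^5(\mathrm{sym}_{2211}+\mathrm{sym}_{2110}+\mathrm{sym}_{1100})\big)$; $\Omega(T_3)=x_0^2p^{-10}\big((p-1)(p+1)(p^2+1)\mathrm{sym}_{1111}+p^4(\mathrm{sym}_{2111}+\mathrm{sym}_{1110})\big)$; $\Omega(\Delta)=x_0^2p^{-10}\mathrm{sym}_{1111}=x_0^2p^{-10}x_1x_2x_3x_4$. *)

theory Defs
  imports Complex_Main "HOL-Combinatorics.Permutations"
begin

definition expv :: "nat \<Rightarrow> nat \<Rightarrow> nat \<Rightarrow> nat \<Rightarrow> nat \<Rightarrow> nat" where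
  "expv i1 i2 i3 i4 = (\<lambda>i. if i < 4 then [i1, i2, i3, i4] ! i else 0)"

text \<open>sym: sum of the distinct monomials obtained from x1^i1 x2^i2 x3^i3 x4^i4 by permuting
  the variables x1..x4 (here x 0, ..., x 3), each with coefficient 1.\<close>
definition msym :: "nat \<Rightarrow> nat \<Rightarrow> nat \<Rightarrow> nat \<Rightarrow> (nat \<Rightarrow> 'a::comm_ring_1) \<Rightarrow> 'a" where
  "msym i1 i2 i3 i4 x =
     (\<Sum>b \<in> {b. \<exists>\<sigma>. \<sigma> permutes {0..<4} \<and> b = expv i1 i2 i3 i4 \<circ> \<sigma>}. \<Prod>i<4. x i ^ b i)"

text \<open>Spherical map on the generators; p is the (specialised) indeterminate, x0 and
  x = (x 0, x 1, x 2, x 3) = (x1, x2, x3, x4) the Laurent variables.\<close>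
definition OmT :: "'a::field \<Rightarrow> 'a \<Rightarrow> (nat \<Rightarrow> 'a) \<Rightarrow> 'a" where
  "OmT p x0 x = x0 * (msym 1 1 1 1 x + msym 1 1 1 0 x + msym 1 1 0 0 x + msym 1 0 0 0 x + 1)"

definition OmT1 :: "'a::field \<Rightarrow> 'a \<Rightarrow> (nat \<Rightarrow> 'a) \<Rightarrow> 'a" where
  "OmT1 p x0 x = x0^2 * inverse (p^8) *
    ((p - 1)^2 * (p + 1) * (4*p^4 + 3*p^3 + 3*p^2 + p + 1) * msym 1 1 1 1 x
     + p^4 * (p - 1) * (3*p^2 + 2*p + 1) * (msym 2 1 1 1 x + msym 1 1 1 0 x)
     + p^5 * (p - 1) * (p + 1) * (msym 2 2 1 1 x + msym 2 1 1 0 x + msym 1 1 0 0 x)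
     + p^7 * (msym 2 2 2 1 x + msym 2 2 1 0 x + msym 2 1 0 0 x + msym 1 0 0 0 x))"

definition OmT2 :: "'a::field \<Rightarrow> 'a \<Rightarrow> (nat \<Rightarrow> 'a) \<Rightarrow> 'a" where
  "OmT2 p x0 x = x0^2 * inverse (p^8) *
    ((p - 1) * (4*p^4 + 3*p^3 + 3*p^2 + p + 1) * msym 1 1 1 1 x
     + p^2 * (p - 1) * (p^2 + p + 1) * (msym 2 1 1 1 x + msym 1 1 1 0 x)
     + p^5 * (msym 2 2 1 1 x + msym 2 1 1 0 x + msym 1 1 0 0 x))"

definition OmT3 :: "'a::field \<Rightarrow> 'a \<Rightarrow> (nat \<Rightarrow> 'a) \<Rightarrow> 'a" where
  "OmT3 p x0 x = x0^2 * inverse (p^10) *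
    ((p - 1) * (p + 1) * (p^2 + 1) * msym 1 1 1 1 x
     + p^4 * (msym 2 1 1 1 x + msym 1 1 1 0 x))"

definition OmDelta :: "'a::field \<Rightarrow> 'a \<Rightarrow> (nat \<Rightarrow> 'a) \<Rightarrow> 'a" where
  "OmDelta p x0 x = x0^2 * inverse (p^10) * msym 1 1 1 1 x"

definition Ecoeffs :: "'a::comm_ring_1 \<Rightarrow> 'a \<Rightarrow> 'a \<Rightarrow> 'a \<Rightarrow> 'a \<Rightarrow> 'a \<Rightarrow> 'a list" where
  "Ecoeffs p T T1 T2 T3 D =
   [ 1,
     0,
     - (p^2) * ((p^8 + p^6 + 2*p^4 + 2*p^2 + 1) * D + (p^2 + p + 1) * (p^2 - p + 1) * T3 + T2),
     p^4 * (p + 1) * ((p^2 + 1) * (p^3 - p^2 + 1) * D + T3) * T,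
     p^7 * ((p^2 + p + 1) * (p^2 - p + 1) * (p^8 + 3*p^7 + p^5 + 2*p^3 + p - 1) * D^2
            + (p^2 + p + 1) * (p^2 - p + 1) * (2*p^3 + p - 2) * T3 * D
            - (p^2 + p + 1) * (p^2 - p + 1) * T3^2
            + (2*p^5 + 2*p^3 + p^2 + p - 1) * T2 * D
            - T2 * T3 + p * (p^2 + p + 1) * T1 * D - (p^2 + p + 1) * T^2 * D),
     - (p^10) * (p + 1) * ((p^2 + 1) * (p^7 - p^6 - p^2 - 1) * D - (p^2 + 1) * T3 - T2) * T * D,
     p^14 * ((p^16 - p^15 - 2*p^14 - 3*p^12 - 5*p^10 - 8*p^8 + p^7 - 8*p^6 - 5*p^4 - 4*p^2 - 1) * D^3
            + (p^12 - p^10 - p^9 - 5*p^8 + 2*p^7 - 7*p^6 - 6*p^4 - 8*p^2 + p - 2) * T3 * D^2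
            + (p^7 - p^4 - 4*p^2 + 2*p - 1) * T3^2 * D + p * T3^3
            - (2*p^8 + 3*p^6 + p^4 - p^3 + 3*p^2 + p + 1) * T2 * D^2
            - (3*p^2 + p + 1) * T2 * T3 * D - (p^6 - p^3 + 1) * T1 * D^2
            - T1 * T3 * D + p^2 * (p^3 + p - 1) * T^2 * D^2),
     - (p^19) * (p - 1) * (p + 1) * ((p^2 + p + 1) * (p^2 - p + 1) * (p^2 + 1) * D
            + (p^2 + p + 1) * (p^2 - p + 1) * T3 + T2) * T * D^2,
     - (p^24) * ((p^16 - 3*p^12 - 3*p^10 - p^9 - 9*p^8 - 8*p^6 - 7*p^4 - 5*p^2 + p - 1) * D^3
            + (p^10 - p^9 - 4*p^8 - 6*p^6 - 8*p^4 - 9*p^2 + 3*p - 2) * T3 * D^2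
            - (p^4 + 4*p^2 - 3*p + 1) * T3^2 * D + p * T3^3
            - (p^8 + 2*p^6 - p^5 + 2*p^4 + p^3 + 4*p^2 + 1) * T2 * D^2
            - (p^3 + 3*p^2 + 1) * T2 * T3 * D + (p^5 - p^2 - 1) * T1 * D^2
            - T1 * T3 * D - p * (p^3 - p^2 - 1) * T^2 * D^2) * D,
     p^29 * (p + 1) * ((p^2 + 1) * (p^5 - 2*p^4 - 1) * D - (p^4 + 1) * T3 - T2) * T * D^3,
     - (p^35) * ((p^2 - p + 1) * (p^2 + p + 1) * (p^8 + 2*p^7 + p^5 + 3*p^3 + p - 1) * D^2
            - (p^2 - p + 1) * (p^2 + p + 1) * (p^5 - 3*p^3 - p + 2) * T3 * D
            - (p^2 - p + 1) * (p^2 + p + 1) * T3^2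
            + (p^5 + 3*p^3 + p^2 + p - 1) * T2 * D
            - T2 * T3 + p * (p^2 + p + 1) * T1 * D - (p^2 + p + 1) * T^2 * D) * D^3,
     - (p^41) * (p + 1) * ((p^2 + 1) * (p^3 - p^2 + 1) * D + T3) * T * D^4,
     p^48 * ((2*p^6 + 2*p^4 + 2*p^2 + 1) * D + (p^2 - p + 1) * (p^2 + p + 1) * T3 + T2) * D^5,
     0,
     - (p^64) * D^7 ]"

definition ecoeff :: "nat \<Rightarrow> 'a::comm_ring_1 \<Rightarrow> 'a \<Rightarrow> 'a \<Rightarrow> 'a \<Rightarrow> 'a \<Rightarrow> 'a \<Rightarrow> 'a" where
  "ecoeff k p T T1 T2 T3 D = Ecoeffs p T T1 T2 T3 D ! k"

definition OmE :: "nat \<Rightarrow> 'a::field \<Rightarrow> 'a \<Rightarrow> (nat \<Rightarrow> 'a) \<Rightarrow> 'a" where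
  "OmE k p x0 x = ecoeff k p (OmT p x0 x) (OmT1 p x0 x) (OmT2 p x0 x) (OmT3 p x0 x) (OmDelta p x0 x)"

end

theory Submission
  imports Defs
begin


definition PS :: "(nat \<Rightarrow> nat) \<Rightarrow> (nat \<Rightarrow> nat) set" where
  "PS e = {b. \<exists>\<sigma>. \<sigma> permutes {0..<4} \<and> b = e \<circ> \<sigma>}"

lemma msym_PS: "msym i1 i2 i3 i4 x = (\<Sum>b \<in> PS (expv i1 i2 i3 i4). \<Prod>i<4. x i ^ b i)"
  unfolding msym_def PS_def ..

lemma PS_perm:
  assumes t: "\<tau> permutes {0..<4}"
  shows "PS (e \<circ> \<tau>) = PS e"
proof
  show "PS (e \<circ> \<tau>) \<subseteq> PS e"
  proof
    fix b assume "b \<in> PS (e \<circ> \<tau>)"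
    then obtain \<sigma> where s: "\<sigma> permutes {0..<4}" and b: "b = (e \<circ> \<tau>) \<circ> \<sigma>"
      unfolding PS_def by blast
    have "\<tau> \<circ> \<sigma> permutes {0..<4}" by (rule permutes_compose[OF s t])
    moreover have "b = e \<circ> (\<tau> \<circ> \<sigma>)" using b by (simp add: comp_assoc)
    ultimately show "b \<in> PS e" unfolding PS_def by blast
  qed
next
  show "PS e \<subseteq> PS (e \<circ> \<tau>)"
  proof
    fix b assume "b \<in> PS e"
    then obtain \<sigma> where s: "\<sigma> permutes {0..<4}" and b: "b = e \<circ> \<sigma>"
      unfolding PS_def by blast
    have "inv \<tau> \<circ> \<sigma> permutes {0..<4}" by (rule permutes_compose[OF s permutes_inv[OF t]])
    moreover have "b = (e \<circ> \<tau>) \<circ> (inv \<tau> \<circ> \<sigma>)"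
      using b by (simp add: fun_eq_iff permutes_inverses(1)[OF t])
    ultimately show "b \<in> PS (e \<circ> \<tau>)" unfolding PS_def by blast
  qed
qed

definition rv :: "nat \<Rightarrow> nat" where "rv i = (if i < 4 then 3 - i else i)"

lemma rv_permutes: "rv permutes {0..<4}"
proof (rule bij_imp_permutes)
  show "bij_betw rv {0..<4} {0..<4}"
    by (rule bij_betw_byWitness[where f'=rv]) (auto simp: rv_def)
qed (simp add: rv_def)

lemma less4: "(j::nat) < 4 \<longleftrightarrow> j = 0 \<or> j = 1 \<or> j = 2 \<or> j = 3" by auto

lemma expv_rv: "expv a b c d \<circ> rv = expv d c b a"
proof
  fix i show "(expv a b c d \<circ> rv) i = expv d c b a i"
  proof (cases "i < 4")
    case True
    then have "i = 0 \<or> i = 1 \<or> i = 2 \<or> i = 3" by auto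
    then show ?thesis by (auto simp: expv_def rv_def)
  qed (simp add: expv_def rv_def)
qed

lemma msym_rev: "msym a b c d x = msym d c b a x"
proof -
  have "PS (expv d c b a) = PS (expv a b c d)"
    using PS_perm[OF rv_permutes, of "expv a b c d"] by (simp only: expv_rv)
  then show ?thesis by (simp only: msym_PS)
qed

definition cm :: "nat \<Rightarrow> (nat \<Rightarrow> nat) \<Rightarrow> nat \<Rightarrow> nat" where
  "cm m e = (\<lambda>i. if i < 4 then m - e i else 0)"

lemma cm_comp:
  assumes s: "\<sigma> permutes {0..<4}"
  shows "cm m (e \<circ> \<sigma>) = cm m e \<circ> \<sigma>"
proof
  fix i show "cm m (e \<circ> \<sigma>) i = (cm m e \<circ> \<sigma>) i"
  proof (cases "i < 4")
    case True
    then have "\<sigma> i < 4" using permutes_in_image[OF s, of i] by simp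
    then show ?thesis using True by (simp add: cm_def)
  next
    case False
    then have "\<sigma> i = i" using permutes_not_in[OF s, of i] by simp
    then show ?thesis using False by (simp add: cm_def)
  qed
qed

lemma PS_cm: "PS (cm m e) = cm m ` PS e"
proof
  show "PS (cm m e) \<subseteq> cm m ` PS e"
  proof
    fix b assume "b \<in> PS (cm m e)"
    then obtain \<sigma> where s: "\<sigma> permutes {0..<4}" and b: "b = cm m e \<circ> \<sigma>"
      unfolding PS_def by blast
    have "b = cm m (e \<circ> \<sigma>)" using b cm_comp[OF s] by simp
    moreover have "e \<circ> \<sigma> \<in> PS e" using s unfolding PS_def by blast
    ultimately show "b \<in> cm m ` PS e" by blast
  qed
next
  show "cm m ` PS e \<subseteq> PS (cm m e)"
  proof
    fix b assume "b \<in> cm m ` PS e"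
    then obtain \<sigma> where s: "\<sigma> permutes {0..<4}" and b: "b = cm m (e \<circ> \<sigma>)"
      unfolding PS_def by blast
    then have "b = cm m e \<circ> \<sigma>" using cm_comp[OF s] by simp
    then show "b \<in> PS (cm m e)" using s unfolding PS_def by blast
  qed
qed

lemma PS_bound:
  assumes "b \<in> PS (expv i1 i2 i3 i4)" "i1 \<le> m" "i2 \<le> m" "i3 \<le> m" "i4 \<le> m"
  shows "\<forall>i<4. b i \<le> m" "\<forall>i. i \<ge> 4 \<longrightarrow> b i = 0"
proof -
  obtain \<sigma> where s: "\<sigma> permutes {0..<4}" and b: "b = expv i1 i2 i3 i4 \<circ> \<sigma>"
    using assms(1) unfolding PS_def by blast
  show "\<forall>i<4. b i \<le> m"
  proof (intro allI impI)
    fix i assume "i < (4::nat)"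
    then have "\<sigma> i < 4" using permutes_in_image[OF s, of i] by simp
    then have "\<sigma> i = 0 \<or> \<sigma> i = 1 \<or> \<sigma> i = 2 \<or> \<sigma> i = 3" by auto
    then show "b i \<le> m" using assms(2-5) by (auto simp: b expv_def)
  qed
  show "\<forall>i. i \<ge> 4 \<longrightarrow> b i = 0"
  proof (intro allI impI)
    fix i :: nat assume "4 \<le> i"
    then have "\<sigma> i = i" using permutes_not_in[OF s, of i] by simp
    then show "b i = 0" using \<open>4 \<le> i\<close> by (simp add: b expv_def)
  qed
qed

lemma cm_expv: "cm m (expv i1 i2 i3 i4) = expv (m - i1) (m - i2) (m - i3) (m - i4)"
proof
  fix i show "cm m (expv i1 i2 i3 i4) i = expv (m - i1) (m - i2) (m - i3) (m - i4) i"
  proof (cases "i < 4")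
    case True
    then have "i = 0 \<or> i = 1 \<or> i = 2 \<or> i = 3" by auto
    then show ?thesis by (auto simp: expv_def cm_def)
  qed (simp add: expv_def cm_def)
qed

lemma msym_inv:
  fixes x :: "nat \<Rightarrow> 'a::field"
  assumes nz: "\<forall>i<4. x i \<noteq> 0" and bnd: "i1 \<le> m" "i2 \<le> m" "i3 \<le> m" "i4 \<le> m"
  shows "msym i1 i2 i3 i4 (\<lambda>i. inverse (x i)) * (\<Prod>i<4. x i) ^ m =
    msym (m - i1) (m - i2) (m - i3) (m - i4) x"
proof -
  let ?S = "PS (expv i1 i2 i3 i4)"
  have step1: "msym i1 i2 i3 i4 (\<lambda>i. inverse (x i)) * (\<Prod>i<4. x i) ^ m =
    (\<Sum>b \<in> ?S. \<Prod>i<4. x i ^ (m - b i))"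
    unfolding msym_PS sum_distrib_right
  proof (rule sum.cong[OF refl])
    fix bb assume bb: "bb \<in> ?S"
    have le: "\<forall>i<4. bb i \<le> m" using PS_bound[OF bb bnd] by blast
    have "(\<Prod>i<4. inverse (x i) ^ bb i) * (\<Prod>i<4. x i) ^ m = (\<Prod>i<4. inverse (x i) ^ bb i * x i ^ m)"
      by (simp add: prod.distrib prod_power_distrib)
    also have "\<dots> = (\<Prod>i<4. x i ^ (m - bb i))"
    proof (rule prod.cong[OF refl])
      fix i assume i: "i \<in> {..<4::nat}"
      then have xi: "x i \<noteq> 0" using nz by auto
      have "x i ^ m = x i ^ bb i * x i ^ (m - bb i)" using le i by (simp add: power_add[symmetric])
      then show "inverse (x i) ^ bb i * x i ^ m = x i ^ (m - bb i)"
        using xi by (simp add: power_inverse[symmetric] field_simps)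
    qed
    finally show "(\<Prod>i<4. inverse (x i) ^ bb i) * (\<Prod>i<4. x i) ^ m = (\<Prod>i<4. x i ^ (m - bb i))" .
  qed
  have inj: "inj_on (cm m) ?S"
  proof (rule inj_onI)
    fix b b' assume b: "b \<in> ?S" and b': "b' \<in> ?S" and eq: "cm m b = cm m b'"
    note B = PS_bound[OF b bnd] and B' = PS_bound[OF b' bnd]
    show "b = b'"
    proof
      fix i show "b i = b' i"
      proof (cases "i < 4")
        case True
        have "m - b i = m - b' i" using fun_cong[OF eq, of i] True by (simp add: cm_def)
        then show ?thesis using B(1) B'(1) True by fastforce
      next
        case False then show ?thesis using B(2) B'(2) by simp
      qed
    qed
  qed
  have "(\<Sum>b \<in> ?S. \<Prod>i<4. x i ^ (m - b i)) = (\<Sum>b \<in> cm m ` ?S. \<Prod>i<4. x i ^ b i)"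
    unfolding sum.reindex[OF inj] o_def
  proof (rule sum.cong[OF refl], rule prod.cong[OF refl])
    fix b i assume "i \<in> {..<4::nat}"
    then show "x i ^ (m - b i) = x i ^ cm m b i" by (simp add: cm_def)
  qed
  also have "\<dots> = msym (m - i1) (m - i2) (m - i3) (m - i4) x"
    unfolding msym_PS PS_cm[symmetric] cm_expv ..
  finally show ?thesis using step1 by simp
qed

lemma PS_const:
  assumes "\<forall>i<4. e i = c" "\<forall>i. i \<ge> 4 \<longrightarrow> e i = 0"
  shows "PS e = {e}"
proof -
  have "e \<circ> \<sigma> = e" if s: "\<sigma> permutes {0..<4}" for \<sigma>
  proof
    fix i show "(e \<circ> \<sigma>) i = e i"
    proof (cases "i < 4")
      case True
      then have "\<sigma> i < 4" using permutes_in_image[OF s, of i] by simp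
      then show ?thesis using True assms by simp
    next
      case False
      then have "\<sigma> i = i" using permutes_not_in[OF s, of i] by simp
      then show ?thesis by simp
    qed
  qed
  then show ?thesis unfolding PS_def using permutes_id by fastforce
qed

lemma prod4: "(\<Prod>i<4. f i) = f 0 * f 1 * f 2 * f (3::nat)"
  by (simp add: numeral_eq_Suc lessThan_Suc mult_ac)

lemma m1111: "msym 1 1 1 1 x = (\<Prod>i<4. x i)"
proof -
  have "PS (expv 1 1 1 1) = {expv 1 1 1 1}" by (rule PS_const[where c=1]) (auto simp: expv_def less4)
  then show ?thesis unfolding msym_PS by (simp add: prod4 expv_def)
qed

lemma m0000: "msym 0 0 0 0 x = 1"
proof -
  have "PS (expv 0 0 0 0) = {expv 0 0 0 0}" by (rule PS_const[where c=0]) (auto simp: expv_def less4)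
  then show ?thesis unfolding msym_PS by (simp add: expv_def prod4)
qed



definition W1 :: "'a::field \<Rightarrow> 'a \<Rightarrow> 'a \<Rightarrow> 'a \<Rightarrow> 'a \<Rightarrow> 'a" where
  "W1 p g0 g1 g2 g3 = inverse (p^8) *
    ((p - 1)^2 * (p + 1) * (4*p^4 + 3*p^3 + 3*p^2 + p + 1) * g0
     + p^4 * (p - 1) * (3*p^2 + 2*p + 1) * g1
     + p^5 * (p - 1) * (p + 1) * g2 + p^7 * g3)"
definition W2 :: "'a::field \<Rightarrow> 'a \<Rightarrow> 'a \<Rightarrow> 'a \<Rightarrow> 'a" where
  "W2 p g0 g1 g2 = inverse (p^8) *
    ((p - 1) * (4*p^4 + 3*p^3 + 3*p^2 + p + 1) * g0
     + p^2 * (p - 1) * (p^2 + p + 1) * g1 + p^5 * g2)"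
definition W3 :: "'a::field \<Rightarrow> 'a \<Rightarrow> 'a \<Rightarrow> 'a" where
  "W3 p g0 g1 = inverse (p^10) * ((p - 1) * (p + 1) * (p^2 + 1) * g0 + p^4 * g1)"
definition WD :: "'a::field \<Rightarrow> 'a \<Rightarrow> 'a" where
  "WD p g0 = inverse (p^10) * g0"

lemma key0:
  fixes p T g0 g1 g2 g3 :: "'a::field_char_0"
  assumes "p \<noteq> 0" "g0 \<noteq> 0"
  shows "ecoeff 14 p T (W1 p g0 g1 g2 g3) (W2 p g0 g1 g2) (W3 p g0 g1) (WD p g0) =
    - inverse (p ^ 6) * power_int g0 (7 - int 0) *
    ecoeff 0 (inverse p) T (W1 (inverse p) g0 g1 g2 g3) (W2 (inverse p) g0 g1 g2) (W3 (inverse p) g0 g1) (WD (inverse p) g0)"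
  using assms
  by (simp add: ecoeff_def Ecoeffs_def W1_def W2_def W3_def WD_def,
      (simp add: field_simps)?, algebra?)

lemma key1:
  fixes p T g0 g1 g2 g3 :: "'a::field_char_0"
  assumes "p \<noteq> 0" "g0 \<noteq> 0"
  shows "ecoeff 13 p T (W1 p g0 g1 g2 g3) (W2 p g0 g1 g2) (W3 p g0 g1) (WD p g0) =
    - inverse (p ^ 6) * power_int g0 (7 - int 1) *
    ecoeff 1 (inverse p) T (W1 (inverse p) g0 g1 g2 g3) (W2 (inverse p) g0 g1 g2) (W3 (inverse p) g0 g1) (WD (inverse p) g0)"
  using assms
  by (simp add: ecoeff_def Ecoeffs_def W1_def W2_def W3_def WD_def,
      (simp add: field_simps)?, algebra?)

lemma key2:
  fixes p T g0 g1 g2 g3 :: "'a::field_char_0"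
  assumes "p \<noteq> 0" "g0 \<noteq> 0"
  shows "ecoeff 12 p T (W1 p g0 g1 g2 g3) (W2 p g0 g1 g2) (W3 p g0 g1) (WD p g0) =
    - inverse (p ^ 6) * power_int g0 (7 - int 2) *
    ecoeff 2 (inverse p) T (W1 (inverse p) g0 g1 g2 g3) (W2 (inverse p) g0 g1 g2) (W3 (inverse p) g0 g1) (WD (inverse p) g0)"
  using assms
  by (simp add: ecoeff_def Ecoeffs_def W1_def W2_def W3_def WD_def,
      (simp add: field_simps)?, algebra?)

lemma key3:
  fixes p T g0 g1 g2 g3 :: "'a::field_char_0"
  assumes "p \<noteq> 0" "g0 \<noteq> 0"
  shows "ecoeff 11 p T (W1 p g0 g1 g2 g3) (W2 p g0 g1 g2) (W3 p g0 g1) (WD p g0) =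
    - inverse (p ^ 6) * power_int g0 (7 - int 3) *
    ecoeff 3 (inverse p) T (W1 (inverse p) g0 g1 g2 g3) (W2 (inverse p) g0 g1 g2) (W3 (inverse p) g0 g1) (WD (inverse p) g0)"
  using assms
  by (simp add: ecoeff_def Ecoeffs_def W1_def W2_def W3_def WD_def,
      (simp add: field_simps)?, algebra?)

lemma key4:
  fixes p T g0 g1 g2 g3 :: "'a::field_char_0"
  assumes "p \<noteq> 0" "g0 \<noteq> 0"
  shows "ecoeff 10 p T (W1 p g0 g1 g2 g3) (W2 p g0 g1 g2) (W3 p g0 g1) (WD p g0) =
    - inverse (p ^ 6) * power_int g0 (7 - int 4) *
    ecoeff 4 (inverse p) T (W1 (inverse p) g0 g1 g2 g3) (W2 (inverse p) g0 g1 g2) (W3 (inverse p) g0 g1) (WD (inverse p) g0)"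
  using assms
  by (simp add: ecoeff_def Ecoeffs_def W1_def W2_def W3_def WD_def,
      (simp add: field_simps)?, algebra?)

lemma key5:
  fixes p T g0 g1 g2 g3 :: "'a::field_char_0"
  assumes "p \<noteq> 0" "g0 \<noteq> 0"
  shows "ecoeff 9 p T (W1 p g0 g1 g2 g3) (W2 p g0 g1 g2) (W3 p g0 g1) (WD p g0) =
    - inverse (p ^ 6) * power_int g0 (7 - int 5) *
    ecoeff 5 (inverse p) T (W1 (inverse p) g0 g1 g2 g3) (W2 (inverse p) g0 g1 g2) (W3 (inverse p) g0 g1) (WD (inverse p) g0)"
  using assms
  by (simp add: ecoeff_def Ecoeffs_def W1_def W2_def W3_def WD_def,
      (simp add: field_simps)?, algebra?)

lemma key6:
  fixes p T g0 g1 g2 g3 :: "'a::field_char_0"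
  assumes "p \<noteq> 0" "g0 \<noteq> 0"
  shows "ecoeff 8 p T (W1 p g0 g1 g2 g3) (W2 p g0 g1 g2) (W3 p g0 g1) (WD p g0) =
    - inverse (p ^ 6) * power_int g0 (7 - int 6) *
    ecoeff 6 (inverse p) T (W1 (inverse p) g0 g1 g2 g3) (W2 (inverse p) g0 g1 g2) (W3 (inverse p) g0 g1) (WD (inverse p) g0)"
  using assms
  by (simp add: ecoeff_def Ecoeffs_def W1_def W2_def W3_def WD_def,
      (simp add: field_simps)?, algebra?)

lemma key7:
  fixes p T g0 g1 g2 g3 :: "'a::field_char_0"
  assumes "p \<noteq> 0" "g0 \<noteq> 0"
  shows "ecoeff 7 p T (W1 p g0 g1 g2 g3) (W2 p g0 g1 g2) (W3 p g0 g1) (WD p g0) =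
    - inverse (p ^ 6) * power_int g0 (7 - int 7) *
    ecoeff 7 (inverse p) T (W1 (inverse p) g0 g1 g2 g3) (W2 (inverse p) g0 g1 g2) (W3 (inverse p) g0 g1) (WD (inverse p) g0)"
  using assms
  by (simp add: ecoeff_def Ecoeffs_def W1_def W2_def W3_def WD_def,
      (simp add: field_simps)?, algebra?)

abbreviation EW :: "nat \<Rightarrow> 'a::field \<Rightarrow> 'a \<Rightarrow> 'a \<Rightarrow> 'a \<Rightarrow> 'a \<Rightarrow> 'a \<Rightarrow> 'a" where
  "EW k p T g0 g1 g2 g3 \<equiv> ecoeff k p T (W1 p g0 g1 g2 g3) (W2 p g0 g1 g2) (W3 p g0 g1) (WD p g0)"

lemma keyle7:
  fixes p T g0 g1 g2 g3 :: "'a::field_char_0"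
  assumes "k \<le> 7" "p \<noteq> 0" "g0 \<noteq> 0"
  shows "EW (14 - k) p T g0 g1 g2 g3 =
    - inverse (p ^ 6) * power_int g0 (7 - int k) * EW k (inverse p) T g0 g1 g2 g3"
proof -
  have "k = 0 \<or> k = 1 \<or> k = 2 \<or> k = 3 \<or> k = 4 \<or> k = 5 \<or> k = 6 \<or> k = 7" using assms(1) by auto
  then show ?thesis
  proof (elim disjE)
    assume "k = 0" then show ?thesis using key0[OF assms(2,3)] by simp
  next
    assume "k = 1" then show ?thesis using key1[OF assms(2,3)] by simp
  next
    assume "k = 2" then show ?thesis using key2[OF assms(2,3)] by simp
  next
    assume "k = 3" then show ?thesis using key3[OF assms(2,3)] by simp
  next
    assume "k = 4" then show ?thesis using key4[OF assms(2,3)] by simp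
  next
    assume "k = 5" then show ?thesis using key5[OF assms(2,3)] by simp
  next
    assume "k = 6" then show ?thesis using key6[OF assms(2,3)] by simp
  next
    assume "k = 7" then show ?thesis using key7[OF assms(2,3)] by simp
  qed
qed

lemma flip:
  fixes p g A B :: "'a::field"
  assumes h: "A = - inverse (inverse p ^ 6) * power_int g (7 - int (14 - k)) * B"
    and "p \<noteq> 0" "g \<noteq> 0" "k \<le> 14"
  shows "B = - inverse (p ^ 6) * power_int g (7 - int k) * A"
proof -
  have e: "power_int g (7 - int k) * power_int g (7 - int (14 - k)) = 1"
    using assms(3,4) by (simp add: power_int_add[symmetric] of_nat_diff)
  have "- inverse (p ^ 6) * power_int g (7 - int k) * A
     = (inverse (p ^ 6) * inverse (inverse p ^ 6)) * (power_int g (7 - int k) * power_int g (7 - int (14 - k))) * B"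
    by (simp add: h algebra_simps)
  also have "\<dots> = B" using e assms(2) by (simp add: power_inverse)
  finally show ?thesis by simp
qed

lemma key_all:
  fixes p T g0 g1 g2 g3 :: "'a::field_char_0"
  assumes "k \<le> 14" "p \<noteq> 0" "g0 \<noteq> 0"
  shows "EW (14 - k) p T g0 g1 g2 g3 =
    - inverse (p ^ 6) * power_int g0 (7 - int k) * EW k (inverse p) T g0 g1 g2 g3"
proof (cases "k \<le> 7")
  case True then show ?thesis using keyle7 assms by blast
next
  case False
  have "EW (14 - (14 - k)) (inverse p) T g0 g1 g2 g3 =
    - inverse (inverse p ^ 6) * power_int g0 (7 - int (14 - k)) * EW (14 - k) (inverse (inverse p)) T g0 g1 g2 g3"
    using keyle7[of "14 - k" "inverse p"] False assms by simp
  then have h: "EW k (inverse p) T g0 g1 g2 g3 =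
    - inverse (inverse p ^ 6) * power_int g0 (7 - int (14 - k)) * EW (14 - k) p T g0 g1 g2 g3"
    using assms(1) by simp
  show ?thesis by (rule flip[OF h assms(2,3,1)])
qed



definition G0 :: "'a::field \<Rightarrow> (nat \<Rightarrow> 'a) \<Rightarrow> 'a" where
  "G0 x0 x = x0^2 * msym 1 1 1 1 x"
definition G1 :: "'a::field \<Rightarrow> (nat \<Rightarrow> 'a) \<Rightarrow> 'a" where
  "G1 x0 x = x0^2 * (msym 2 1 1 1 x + msym 1 1 1 0 x)"
definition G2 :: "'a::field \<Rightarrow> (nat \<Rightarrow> 'a) \<Rightarrow> 'a" where
  "G2 x0 x = x0^2 * (msym 2 2 1 1 x + msym 2 1 1 0 x + msym 1 1 0 0 x)"
definition G3 :: "'a::field \<Rightarrow> (nat \<Rightarrow> 'a) \<Rightarrow> 'a" where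
  "G3 x0 x = x0^2 * (msym 2 2 2 1 x + msym 2 2 1 0 x + msym 2 1 0 0 x + msym 1 0 0 0 x)"

lemma OmT1_W: "OmT1 p x0 x = W1 p (G0 x0 x) (G1 x0 x) (G2 x0 x) (G3 x0 x)"
  unfolding OmT1_def W1_def G0_def G1_def G2_def G3_def by (simp add: algebra_simps)
lemma OmT2_W: "OmT2 p x0 x = W2 p (G0 x0 x) (G1 x0 x) (G2 x0 x)"
  unfolding OmT2_def W2_def G0_def G1_def G2_def by (simp add: algebra_simps)
lemma OmT3_W: "OmT3 p x0 x = W3 p (G0 x0 x) (G1 x0 x)"
  unfolding OmT3_def W3_def G0_def G1_def by (simp add: algebra_simps)
lemma OmD_W: "OmDelta p x0 x = WD p (G0 x0 x)"
  unfolding OmDelta_def WD_def G0_def by (simp add: algebra_simps)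

lemma sq_split1: "((x0::'a::field) * P)^2 * A = x0^2 * (A * P^2)"
  by (simp add: power_mult_distrib algebra_simps)
lemma sq_split2: "((x0::'a::field) * P)^2 * (A + B) = x0^2 * (A * P^2 + B * P^2)"
  by (simp add: power_mult_distrib algebra_simps)
lemma sq_split3: "((x0::'a::field) * P)^2 * (A + B + C) = x0^2 * (A * P^2 + B * P^2 + C * P^2)"
  by (simp add: power_mult_distrib algebra_simps)
lemma sq_split4: "((x0::'a::field) * P)^2 * (A + B + C + D) = x0^2 * (A * P^2 + B * P^2 + C * P^2 + D * P^2)"
  by (simp add: power_mult_distrib algebra_simps)
lemma lin_split: "(x0::'a::field) * P * (A + B + C + D + 1) = x0 * (A * P + B * P + C * P + D * P + P)"
  by (simp add: algebra_simps)

context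
  fixes x :: "nat \<Rightarrow> 'a::field"
  assumes nz: "\<forall>i<4. x i \<noteq> 0"
begin

lemma mi2: "i1 \<le> 2 \<Longrightarrow> i2 \<le> 2 \<Longrightarrow> i3 \<le> 2 \<Longrightarrow> i4 \<le> 2 \<Longrightarrow>
  msym i1 i2 i3 i4 (\<lambda>i. inverse (x i)) * (\<Prod>i<4. x i) ^ 2 = msym (2 - i4) (2 - i3) (2 - i2) (2 - i1) x"
  using msym_inv[OF nz, of i1 2 i2 i3 i4] msym_rev by metis
lemma mi1: "i1 \<le> 1 \<Longrightarrow> i2 \<le> 1 \<Longrightarrow> i3 \<le> 1 \<Longrightarrow> i4 \<le> 1 \<Longrightarrow>
  msym i1 i2 i3 i4 (\<lambda>i. inverse (x i)) * (\<Prod>i<4. x i) = msym (1 - i4) (1 - i3) (1 - i2) (1 - i1) x"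
  using msym_inv[OF nz, of i1 1 i2 i3 i4] msym_rev by (metis power_one_right)

lemma c1111: "msym 1 1 1 1 (\<lambda>i. inverse (x i)) * (\<Prod>i<4. x i) ^ 2 = msym 1 1 1 1 x"
proof -
  have "x 0 \<noteq> 0" "x 1 \<noteq> 0" "x 2 \<noteq> 0" "x 3 \<noteq> 0" using nz by auto
  then show ?thesis unfolding m1111 prod4 by (simp add: field_simps power2_eq_square)
qed
lemma G0_inv: "G0 (x0 * (\<Prod>i<4. x i)) (\<lambda>i. inverse (x i)) = G0 x0 x"
  unfolding G0_def sq_split1 c1111 ..
lemma G1_inv: "G1 (x0 * (\<Prod>i<4. x i)) (\<lambda>i. inverse (x i)) = G1 x0 x"
  unfolding G1_def sq_split2 by (simp add: mi2 add.commute)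
lemma G2_inv: "G2 (x0 * (\<Prod>i<4. x i)) (\<lambda>i. inverse (x i)) = G2 x0 x"
  unfolding G2_def sq_split3 by (simp add: mi2 add_ac)
lemma G3_inv: "G3 (x0 * (\<Prod>i<4. x i)) (\<lambda>i. inverse (x i)) = G3 x0 x"
  unfolding G3_def sq_split4 by (simp add: mi2 add_ac)
lemma T_inv: "OmT (inverse p) (x0 * (\<Prod>i<4. x i)) (\<lambda>i. inverse (x i)) = OmT p x0 x"
proof -
  have mS: "msym (Suc 0) (Suc 0) (Suc 0) (Suc 0) x = prod x {..<4}" using m1111[of x] by simp
  show ?thesis unfolding OmT_def lin_split by (simp add: mi1 m0000 mS add_ac)
qed
end

theorem proposition6p1:
  fixes p x0 :: "'a::field_char_0" and x :: "nat \<Rightarrow> 'a" and k :: nat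
  assumes "k \<le> 14" and "p \<noteq> 0" and "x0 \<noteq> 0" and "\<forall>i<4. x i \<noteq> 0"
  shows "OmE (14 - k) p x0 x =
    - inverse (p ^ 6) * power_int (x0^2 * (\<Prod>i<4. x i)) (7 - int k) *
      OmE k (inverse p) (x0 * (\<Prod>i<4. x i)) (\<lambda>i. inverse (x i))"
proof -
  have P: "x0^2 * (\<Prod>i<4. x i) = G0 x0 x" unfolding G0_def m1111 by simp
  have "x 0 \<noteq> 0" "x 1 \<noteq> 0" "x 2 \<noteq> 0" "x 3 \<noteq> 0" using assms(4) by auto
  then have g0: "G0 x0 x \<noteq> 0" using assms(3) unfolding G0_def m1111 prod4 by simp
  have L: "OmE (14 - k) p x0 x = EW (14 - k) p (OmT p x0 x) (G0 x0 x) (G1 x0 x) (G2 x0 x) (G3 x0 x)"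
    by (simp add: OmE_def OmT1_W OmT2_W OmT3_W OmD_W)
  have R: "OmE k (inverse p) (x0 * (\<Prod>i<4. x i)) (\<lambda>i. inverse (x i)) =
     EW k (inverse p) (OmT p x0 x) (G0 x0 x) (G1 x0 x) (G2 x0 x) (G3 x0 x)"
    by (simp add: OmE_def OmT1_W OmT2_W OmT3_W OmD_W G0_inv[OF assms(4)] G1_inv[OF assms(4)]
        G2_inv[OF assms(4)] G3_inv[OF assms(4)] T_inv[OF assms(4)])
  show ?thesis unfolding L R P by (rule key_all[OF assms(1,2) g0])
qed

end
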